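(* Let $X$ be a complex Banach space, $T$ a bounded linear operator on $X$, and $x_0\in X$ a convex-cyclic vector for $T$. Let $\varepsilon>0$ and $N_0\in\mathbb{N}$. Then for every $x\in X$ there is a convex polynomial $P_k(t)=a_0+a_1t+\cdots+a_kt^k$ with $a_k>0$ and $k>N_0$ such that $\Vert P_k(T)(x_0)-x\Vert<\varepsilon$.
   Context: A convex polynomial is a polynomial $\sum_{i=0}^k a_it^i$ with $a_i\ge 0$ and $\sum_i a_i=1$. A vector $x_0$ is convex-cyclic for $T$ if the convex hull of $\{T^n x_0:n\ge 0\}$, i.e. $\{P(T)x_0: P \text{ a convex polynomial}\}$, is dense in $X$. *)

theory Defs
  imports "HOL-Analysis.Analysis"
begin

text \<open>A complex structure on a real Banach space: a complex scalar multiplication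
  extending the real one, satisfying the vector space axioms and norm homogeneity.
  (Isabelle/HOL has no type class of complex normed spaces.)\<close>
definition complex_scaling :: "(complex \<Rightarrow> 'a::real_normed_vector \<Rightarrow> 'a) \<Rightarrow> bool" where
  "complex_scaling sc \<longleftrightarrow>
     (\<forall>r x. sc (complex_of_real r) x = r *\<^sub>R x) \<and>
     (\<forall>a x y. sc a (x + y) = sc a x + sc a y) \<and>
     (\<forall>a b x. sc (a + b) x = sc a x + sc b x) \<and>
     (\<forall>a b x. sc (a * b) x = sc a (sc b x)) \<and>
     (\<forall>a x. norm (sc a x) = cmod a * norm x)"

definition bounded_complex_linear :: "(complex \<Rightarrow> 'a::real_normed_vector \<Rightarrow> 'a) \<Rightarrow> ('a \<Rightarrow> 'a) \<Rightarrow> bool" where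
  "bounded_complex_linear sc T \<longleftrightarrow> bounded_linear T \<and> (\<forall>a x. T (sc a x) = sc a (T x))"

definition convex_coeffs :: "(nat \<Rightarrow> real) \<Rightarrow> nat \<Rightarrow> bool" where
  "convex_coeffs a k \<longleftrightarrow> (\<forall>i\<le>k. a i \<ge> 0) \<and> (\<Sum>i\<le>k. a i) = 1"

definition poly_op :: "(nat \<Rightarrow> real) \<Rightarrow> nat \<Rightarrow> ('a::real_vector \<Rightarrow> 'a) \<Rightarrow> 'a \<Rightarrow> 'a" where
  "poly_op a k T x = (\<Sum>i\<le>k. a i *\<^sub>R (T ^^ i) x)"

definition convex_cyclic :: "('a::real_normed_vector \<Rightarrow> 'a) \<Rightarrow> 'a \<Rightarrow> bool" where
  "convex_cyclic T x0 \<longleftrightarrow> closure (convex hull {(T ^^ n) x0 | n. True}) = UNIV"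

end

theory Submission
  imports Defs
begin

definition fpoly :: "(nat \<Rightarrow> 'a::real_vector) \<Rightarrow> 'a set" where
  "fpoly f = {y. \<exists>a K. (\<forall>i. 0 \<le> a i) \<and> (\<forall>i>K. a i = (0::real)) \<and> (\<Sum>i\<le>K. a i) = 1
      \<and> y = (\<Sum>i\<le>K. a i *\<^sub>R f i)}"

lemma ext_sum:
  fixes K N :: nat and f :: "nat \<Rightarrow> 'a::real_vector"
  assumes "\<forall>i>K. a i = (0::real)" "K \<le> N"
  shows "(\<Sum>i\<le>N. a i) = (\<Sum>i\<le>K. a i)" and "(\<Sum>i\<le>N. a i *\<^sub>R f i) = (\<Sum>i\<le>K. a i *\<^sub>R f i)"
proof -
  show "(\<Sum>i\<le>N. a i) = (\<Sum>i\<le>K. a i)"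
    using assms by (intro sum.mono_neutral_right) (auto simp: not_le)
  show "(\<Sum>i\<le>N. a i *\<^sub>R f i) = (\<Sum>i\<le>K. a i *\<^sub>R f i)"
    using assms by (intro sum.mono_neutral_right) (auto simp: not_le)
qed

lemma fpoly_convex: "convex (fpoly f)"
  unfolding convex_def
proof (intro ballI allI impI)
  fix x y and u v :: real
  assume x: "x \<in> fpoly f" and y: "y \<in> fpoly f" and uv: "0 \<le> u" "0 \<le> v" "u + v = 1"
  obtain a K where a: "\<forall>i. 0 \<le> a i" "\<forall>i>K. a i = 0" "(\<Sum>i\<le>K. a i) = 1" "x = (\<Sum>i\<le>K. a i *\<^sub>R f i)"
    using x unfolding fpoly_def by blast
  obtain b M where b: "\<forall>i. 0 \<le> b i" "\<forall>i>M. b i = 0" "(\<Sum>i\<le>M. b i) = 1" "y = (\<Sum>i\<le>M. b i *\<^sub>R f i)"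
    using y unfolding fpoly_def by blast
  define c where "c i = u * a i + v * b i" for i
  have s1: "(\<Sum>i\<le>K+M. a i) = 1" "(\<Sum>i\<le>K+M. b i) = 1"
    using ext_sum(1)[OF a(2), of "K+M"] ext_sum(1)[OF b(2), of "K+M"] a(3) b(3) by auto
  have s2: "x = (\<Sum>i\<le>K+M. a i *\<^sub>R f i)" "y = (\<Sum>i\<le>K+M. b i *\<^sub>R f i)"
    using ext_sum(2)[OF a(2), of "K+M" f] ext_sum(2)[OF b(2), of "K+M" f] a(4) b(4) by auto
  have "\<forall>i. 0 \<le> c i" using a(1) b(1) uv unfolding c_def by simp
  moreover have "\<forall>i>K+M. c i = 0" using a(2) b(2) unfolding c_def by simp
  moreover have "(\<Sum>i\<le>K+M. c i) = 1"
    unfolding c_def using s1 uv by (simp add: sum.distrib sum_distrib_left[symmetric])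
  moreover have "u *\<^sub>R x + v *\<^sub>R y = (\<Sum>i\<le>K+M. c i *\<^sub>R f i)"
    unfolding c_def s2 by (simp add: scaleR_sum_right sum.distrib scaleR_add_left)
  ultimately show "u *\<^sub>R x + v *\<^sub>R y \<in> fpoly f" unfolding fpoly_def by blast
qed

lemma fpoly_hull: "convex hull (range f) \<subseteq> fpoly f"
proof (rule hull_minimal)
  show "convex (fpoly f)" by (rule fpoly_convex)
  show "range f \<subseteq> fpoly f"
  proof
    fix z assume "z \<in> range f"
    then obtain n where n: "z = f n" by auto
    define a where "a i = (if i = n then 1 else (0::real))" for i
    have "(\<Sum>i\<le>n. a i) = 1" unfolding a_def by simp
    moreover have "z = (\<Sum>i\<le>n. a i *\<^sub>R f i)" unfolding a_def n
      by (simp add: sum.delta if_distrib[of "\<lambda>c. c *\<^sub>R f _"] cong: if_cong)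
    moreover have "\<forall>i. 0 \<le> a i" "\<forall>i>n. a i = 0" unfolding a_def by auto
    ultimately show "z \<in> fpoly f" unfolding fpoly_def by blast
  qed
qed

theorem lemma2p2:
  fixes sc :: "complex \<Rightarrow> 'a::banach \<Rightarrow> 'a" and T :: "'a \<Rightarrow> 'a"
    and x0 x :: 'a and \<epsilon> :: real and N0 :: nat
  assumes "complex_scaling sc"
    and "bounded_complex_linear sc T"
    and "convex_cyclic T x0"
    and "\<epsilon> > 0"
  shows "\<exists>k a. k > N0 \<and> convex_coeffs a k \<and> a k > 0 \<and> norm (poly_op a k T x0 - x) < \<epsilon>"
proof -
  define f where "f n = (T ^^ n) x0" for n
  have "{(T ^^ n) x0 | n. True} = range f" unfolding f_def by auto
  with assms(3) have "x \<in> closure (convex hull (range f))" unfolding convex_cyclic_def by simp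
  then obtain y where y: "y \<in> convex hull (range f)" "dist y x < \<epsilon>/2"
    using assms(4) by (metis closure_approachable half_gt_zero)
  then obtain a K where a: "\<forall>i. 0 \<le> a i" "\<forall>i>K. a i = 0" "(\<Sum>i\<le>K. a i) = 1" "y = (\<Sum>i\<le>K. a i *\<^sub>R f i)"
    using fpoly_hull unfolding fpoly_def by blast
  define k where "k = K + N0 + 1"
  define M where "M = norm (f k) + norm y + 1"
  have M: "M > 0" unfolding M_def by (simp add: add_nonneg_pos)
  define d where "d = min (1/2) (\<epsilon> / (2*M))"
  have d: "0 < d" "d < 1" "d * M \<le> \<epsilon>/2" using M assms(4) unfolding d_def
    by (auto simp: min_def field_simps)
  define b where "b i = (if i = k then d else (1 - d) * a i)" for i
  have ak: "a k = 0" using a(2) unfolding k_def by simp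
  have K: "K \<le> k" unfolding k_def by simp
  have sa: "(\<Sum>i\<le>k. a i) = 1" using ext_sum(1)[OF a(2) K] a(3) by simp
  have sy: "y = (\<Sum>i\<le>k. a i *\<^sub>R f i)" using ext_sum(2)[OF a(2) K, of f] a(4) by simp
  have k0: "k = Suc (k - 1)" unfolding k_def by simp
  have split1: "(\<Sum>i\<le>k. g i) = (\<Sum>i<k. g i) + g k" for g :: "nat \<Rightarrow> 'b::comm_monoid_add"
    by (simp add: lessThan_Suc_atMost[symmetric] add.commute)
  have sb: "(\<Sum>i\<le>k. b i) = 1"
  proof -
    have "(\<Sum>i\<le>k. b i) = (\<Sum>i<k. (1-d) * a i) + d"
      unfolding split1 b_def by simp
    also have "(\<Sum>i<k. (1-d) * a i) = (1-d) * (\<Sum>i\<le>k. a i)"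
      using split1[of a] ak by (simp add: sum_distrib_left)
    finally show ?thesis using sa by simp
  qed
  have pb: "poly_op b k T x0 = (1-d) *\<^sub>R y + d *\<^sub>R f k"
  proof -
    have "poly_op b k T x0 = (\<Sum>i<k. ((1-d) * a i) *\<^sub>R f i) + d *\<^sub>R f k"
      unfolding poly_op_def f_def[symmetric] split1 b_def by simp
    also have "(\<Sum>i<k. ((1-d) * a i) *\<^sub>R f i) = (1-d) *\<^sub>R y"
      unfolding sy split1[of "\<lambda>i. a i *\<^sub>R f i"] using ak by (simp add: scaleR_sum_right)
    finally show ?thesis .
  qed
  have "poly_op b k T x0 - y = d *\<^sub>R (f k - y)" unfolding pb by (simp add: algebra_simps)
  hence "norm (poly_op b k T x0 - y) = d * norm (f k - y)" using d by simp
  also have "\<dots> \<le> d * M" using d unfolding M_def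
    by (intro mult_left_mono) (auto intro: order_trans[OF norm_triangle_ineq4])
  finally have n1: "norm (poly_op b k T x0 - y) \<le> \<epsilon>/2" using d by simp
  have "norm (poly_op b k T x0 - x) \<le> norm (poly_op b k T x0 - y) + norm (y - x)"
    by (metis norm_triangle_ineq diff_add_cancel add_diff_eq)
  also have "\<dots> < \<epsilon>" using n1 y(2) by (simp add: dist_norm)
  finally have "norm (poly_op b k T x0 - x) < \<epsilon>" .
  moreover have "convex_coeffs b k" unfolding convex_coeffs_def using sb a(1) d
    by (auto simp: b_def)
  moreover have "b k > 0" using d by (simp add: b_def)
  moreover have "k > N0" unfolding k_def by simp
  ultimately show ?thesis by blast
qed

end
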